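(* Let $0<\varepsilon\le 0.1$, let $\Box$ be a closed axis-parallel square of side length $\varepsilon$, and let $R\subseteq\Box$ be any set. For any points $o\in\Box$ and $p\in R\oplus D$, the segment $\overline{op}$ is contained in $R\oplus D$, and moreover the relative interior of $\overline{op}$ is contained in the interior of $R\oplus D$.
   Context: $D$ is the closed unit disk centered at the origin and $\oplus$ denotes Minkowski sum. *)

theory Defs
  imports "HOL-Analysis.Analysis"
begin

definition unit_disk :: "(real \<times> real) set" where
  "unit_disk = cball 0 1"

definition minkowski_sum :: "(real \<times> real) set \<Rightarrow> (real \<times> real) set \<Rightarrow> (real \<times> real) set"
  (infixl "\<oplus>" 65) where
  "A \<oplus> B = {a + b | a b. a \<in> A \<and> b \<in> B}"

definition axis_square :: "real \<Rightarrow> real \<Rightarrow> real \<Rightarrow> (real \<times> real) set" where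
  "axis_square a b s = {(x, y). a \<le> x \<and> x \<le> a + s \<and> b \<le> y \<and> y \<le> b + s}"

end

theory Submission
  imports Defs
begin

lemma norm_pair_le_sum: "norm ((u,v)::real\<times>real) \<le> \<bar>u\<bar> + \<bar>v\<bar>"
proof -
  have "norm (u,v) = sqrt (u^2 + v^2)" by (simp add: norm_Pair)
  also have "\<dots> \<le> sqrt ((\<bar>u\<bar> + \<bar>v\<bar>)^2)"
  proof (rule real_sqrt_le_mono)
    have "0 \<le> 2 * \<bar>u\<bar> * \<bar>v\<bar>" by simp
    then show "u^2 + v^2 \<le> (\<bar>u\<bar> + \<bar>v\<bar>)^2" by (simp add: power2_sum)
  qed
  also have "\<dots> = \<bar>u\<bar> + \<bar>v\<bar>" by simp
  finally show ?thesis .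
qed

theorem mainTheorem7:
  fixes \<epsilon> a b :: real and R :: "(real \<times> real) set" and q p :: "real \<times> real"
  assumes "0 < \<epsilon>" and "\<epsilon> \<le> 0.1"
    and "R \<subseteq> axis_square a b \<epsilon>"
    and "q \<in> axis_square a b \<epsilon>"
    and "p \<in> R \<oplus> unit_disk"
  shows "closed_segment q p \<subseteq> R \<oplus> unit_disk
    \<and> rel_interior (closed_segment q p) \<subseteq> interior (R \<oplus> unit_disk)"
proof -
  obtain r d where r: "r \<in> R" and d: "norm d \<le> 1" and pe: "p = r + d"
    using assms(5) by (auto simp: minkowski_sum_def unit_disk_def)
  have ball_sub: "cball r 1 \<subseteq> R \<oplus> unit_disk"
  proof
    fix x assume "x \<in> cball r 1"
    then have "norm (x - r) \<le> 1" by (simp add: dist_norm norm_minus_commute)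
    moreover have "x = r + (x - r)" by simp
    ultimately show "x \<in> R \<oplus> unit_disk" unfolding minkowski_sum_def unit_disk_def
      using r by (metis (mono_tags, lifting) mem_Collect_eq mem_cball_0)
  qed
  have int_sub: "ball r 1 \<subseteq> interior (R \<oplus> unit_disk)"
    using ball_sub by (meson ball_subset_cball interior_maximal open_ball order_trans)
  have rsq: "r \<in> axis_square a b \<epsilon>" using r assms(3) by auto
  obtain q1 q2 r1 r2 where qq: "q = (q1,q2)" and rr: "r = (r1,r2)" by fastforce
  have "norm (q - r) \<le> \<bar>q1 - r1\<bar> + \<bar>q2 - r2\<bar>"
    using norm_pair_le_sum[of "q1-r1" "q2-r2"] by (simp add: qq rr)
  also have "\<dots> \<le> 2*\<epsilon>" using assms(4) rsq by (auto simp: axis_square_def qq rr)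
  finally have qr: "norm (q - r) < 1" using assms(2) by simp
  have key: "dist r ((1 - u) *\<^sub>R q + u *\<^sub>R p) \<le> (1-u) * norm (q - r) + u"
    if u: "0 \<le> u" "u \<le> 1" for u
  proof -
    have "(1 - u) *\<^sub>R q + u *\<^sub>R p - r = (1-u) *\<^sub>R (q - r) + u *\<^sub>R d"
      by (simp add: pe algebra_simps)
    then have "dist r ((1 - u) *\<^sub>R q + u *\<^sub>R p) = norm ((1-u) *\<^sub>R (q - r) + u *\<^sub>R d)"
      by (metis dist_commute dist_norm)
    also have "\<dots> \<le> norm ((1-u) *\<^sub>R (q - r)) + norm (u *\<^sub>R d)" by (rule norm_triangle_ineq)
    also have "\<dots> = (1-u) * norm (q - r) + u * norm d" using u by simp
    also have "\<dots> \<le> (1-u) * norm (q - r) + u" using u d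
      by (simp add: mult_left_le)
    finally show ?thesis .
  qed
  have A: "closed_segment q p \<subseteq> cball r 1"
  proof
    fix x assume "x \<in> closed_segment q p"
    then obtain u where u: "0 \<le> u" "u \<le> 1" and x: "x = (1 - u) *\<^sub>R q + u *\<^sub>R p"
      by (auto simp: closed_segment_def)
    have "(1-u) * norm (q - r) \<le> (1-u)" using qr u by (simp add: mult_left_le)
    then show "x \<in> cball r 1" using key[OF u] x by simp
  qed
  have B: "rel_interior (closed_segment q p) \<subseteq> ball r 1"
  proof
    fix x assume xr: "x \<in> rel_interior (closed_segment q p)"
    show "x \<in> ball r 1"
    proof (cases "q = p")
      case True
      then have "x = q" using xr by (simp add: rel_interior_closed_segment)
      then show ?thesis using qr by (simp add: dist_norm norm_minus_commute)
    next
      case False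
      then have "x \<in> open_segment q p" using xr by (simp add: rel_interior_closed_segment)
      then obtain u where u: "0 < u" "u < 1" and x: "x = (1 - u) *\<^sub>R q + u *\<^sub>R p"
        using False by (auto simp: open_segment_image_interval split: if_splits)
      have h: "(1-u) * norm (q - r) < (1-u)" using qr u by simp
      have "dist r x < 1" proof -
        have "dist r x \<le> (1 - u) * norm (q - r) + u" using key[of u] u x by simp
        then show ?thesis using h by linarith
      qed
      then show "x \<in> ball r 1" by simp
    qed
  qed
  show ?thesis using A B ball_sub int_sub by blast
qed

end
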